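(* Let $\mathbf a,\mathbf b\in\mathbb R^n$ be nonzero, $L$ a positive integer, $\tilde{\mathbf a}=\textsc{Round}(\mathbf a/\|\mathbf a\|,L)$, $\tilde{\mathbf b}=\textsc{Round}(\mathbf b/\|\mathbf b\|,L)$, $\mathbf a'=\|\mathbf a\|\tilde{\mathbf a}$, $\mathbf b'=\|\mathbf b\|\tilde{\mathbf b}$, and $\mathcal I=\{i:\mathbf a[i]\neq0\text{ and }\mathbf b[i]\neq0\}$. Then: (1) for all $i$, $\mathbf a'[i]^2/\|\mathbf a'\|^2$ and $\mathbf b'[i]^2/\|\mathbf b'\|^2$ are integer multiples of $1/L$; (2) for any $L$, sample number $m$ and random seed $s$, the Weighted MinHash sketch yields identical outputs on $\mathbf a$ and $\mathbf a'$ and on $\mathbf b$ and $\mathbf b'$, i.e. $W_{\mathbf a}=W_{\mathbf a'}$ and $W_{\mathbf b}=W_{\mathbf b'}$; (3) for $\epsilon\in(0,1)$ and $L\ge 9n^6/\epsilon^2$, $|\langle\mathbf a,\mathbf b\rangle-\langle\mathbf a',\mathbf b'\rangle|\le\epsilon\max(\|\mathbf a_{\mathcal I}\|\|\mathbf b\|,\|\mathbf a\|\|\mathbf b_{\mathcal I}\|)$; (4) for $L\ge n^3$, $\max(\|\mathbf a'_{\mathcal I}\|\|\mathbf b'\|,\|\mathbf a'\|\|\mathbf b'_{\mathcal I}\|)\le 2\max(\|\mathbf a_{\mathcal I}\|\|\mathbf b\|,\|\mathbf a\|\|\mathbf b_{\mathcal I}\|)$.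
   Context: $\|\cdot\|$ is the Euclidean norm; $\mathbf a_{\mathcal I}$ is $\mathbf a$ restricted to indices in $\mathcal I$. Rounding procedure $\textsc{Round}(\mathbf z,L)$ for a unit vector $\mathbf z\in\mathbb R^n$: set $\tilde{\mathbf z}[i]=\operatorname{sign}(\mathbf z[i])\sqrt{\lfloor \mathbf z[i]^2L\rfloor/L}$ for all $i$; let $i^*=\arg\max_i|\mathbf z[i]|$; set $\delta=1-\|\tilde{\mathbf z}\|^2$ and replace $\tilde{\mathbf z}[i^*]$ by $\operatorname{sign}(\mathbf z[i^*])\sqrt{\tilde{\mathbf z}[i^*]^2+\delta}$; return $\tilde{\mathbf z}$. Weighted MinHash sketch of $\mathbf a$ (sample number $m$, seed $s$, integer $L$): set $\tilde{\mathbf a}=\textsc{Round}(\mathbf a/\|\mathbf a\|,L)$. For each $i\in\{1,\dots,n\}$ let $\bar{\mathbf a}^{(i)}\in\mathbb R^L$ have its first $\tilde{\mathbf a}[i]^2L$ entries equal to $\tilde{\mathbf a}[i]$ and the rest $0$, and let $\bar{\mathbf a}=[\bar{\mathbf a}^{(1)},\dots,\bar{\mathbf a}^{(n)}]\in\mathbb R^{nL}$. For $i=1,\dots,m$, using seed $s$ select a fully random hash function $h^i:\{1,\dots,nL\}\to[0,1]$ (determined by $s$), let $j^*=\arg\min_{j:\bar{\mathbf a}[j]\neq0}h^i(j)$, and set $W^{hash}_{\mathbf a}[i]=h^i(j^* )$, $W^{val}_{\mathbf a}[i]=\bar{\mathbf a}[j^*]$. The sketch is $W_{\mathbf a}=\{W^{hash}_{\mathbf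 a},W^{val}_{\mathbf a},\|\mathbf a\|\}$. *)

theory Defs
  imports "HOL-Analysis.Analysis"
begin

text \<open>Vectors in R^n are rendered as real^'n, with n = CARD('n).\<close>

definition round_vec :: "real^'n \<Rightarrow> nat \<Rightarrow> real^'n" where
  "round_vec z L =
    (let zt = (\<chi> i. sgn (z$i) * sqrt (real_of_int \<lfloor>(z$i)^2 * real L\<rfloor> / real L));
         istar = arg_max_on (\<lambda>i. \<bar>z$i\<bar>) UNIV;
         \<delta> = 1 - (norm zt)^2
     in \<chi> i. if i = istar then sgn (z$istar) * sqrt ((zt$istar)^2 + \<delta>) else zt$i)"

text \<open>The expanded vector abar in R^{nL}; position (i,k), k < L, stands for
  coordinate (i-1)L + k + 1.\<close>
definition expand_vec :: "real^'n \<Rightarrow> nat \<Rightarrow> ('n \<times> nat) \<Rightarrow> real" where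
  "expand_vec z L = (\<lambda>(i,k). if k < L \<and> real k < (z$i)^2 * real L then z$i else 0)"

text \<open>Weighted MinHash sketch. H s t is the hash function h^t selected by seed s.
  Output: (W^hash, W^val, norm a).\<close>
definition wmh_sketch ::
  "('s \<Rightarrow> nat \<Rightarrow> ('n \<times> nat) \<Rightarrow> real) \<Rightarrow> nat \<Rightarrow> nat \<Rightarrow> 's \<Rightarrow> real^'n
     \<Rightarrow> real list \<times> real list \<times> real" where
  "wmh_sketch H L m s a =
    (let atl = round_vec ((1 / norm a) *\<^sub>R a) L;
         abar = expand_vec atl L;
         D = {j. abar j \<noteq> 0};
         jstar = (\<lambda>t. arg_min_on (H s t) D)
     in (map (\<lambda>t. H s t (jstar t)) [1..<m+1],
         map (\<lambda>t. abar (jstar t)) [1..<m+1],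
         norm a))"

definition restrict_vec :: "real^'n \<Rightarrow> 'n set \<Rightarrow> real^'n" where
  "restrict_vec a I = (\<chi> i. if i \<in> I then a$i else 0)"

end

theory Submission
  imports Defs
begin

lemma argmax_prop:
  fixes z :: "real^'n"
  shows "\<forall>j. \<bar>z$j\<bar> \<le> \<bar>z$(arg_max_on (\<lambda>i. \<bar>z$i\<bar>) UNIV)\<bar>"
proof -
  obtain x where x: "\<forall>y. \<bar>z$y\<bar> \<le> \<bar>z$x\<bar>"
  proof -
    let ?m = "Max ((\<lambda>i. \<bar>z$i\<bar>) ` UNIV)"
    have "?m \<in> (\<lambda>i. \<bar>z$i\<bar>) ` UNIV" by (rule Max_in) auto
    then obtain x where "?m = \<bar>z$x\<bar>" by blast
    moreover have "\<forall>y. \<bar>z$y\<bar> \<le> ?m" by (auto intro: Max_ge)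
    ultimately show ?thesis using that by auto
  qed
  show ?thesis unfolding arg_max_on_def
    apply (rule arg_maxI[where f="\<lambda>i. \<bar>z$i\<bar>" and P="\<lambda>x. x \<in> UNIV" and x=x])
    using x by (auto simp: not_less)
qed

lemma norm2_sum: fixes x :: "real^'n" shows "(norm x)^2 = (\<Sum>i\<in>UNIV. (x$i)^2)"
  unfolding power2_norm_eq_inner inner_vec_def by (simp add: power2_eq_square)

lemma sgn_abs_aux: fixes x s :: real assumes "s \<ge> 0" shows "sgn x * s = sgn x * \<bar>sgn x * s\<bar>"
  using assms by (cases x rule: linorder_cases) (auto simp: abs_mult)

lemma sgn_sq_aux: fixes x s :: real assumes "x \<noteq> 0" shows "(sgn x * s)^2 = s^2"
  using assms by (cases x rule: linorder_cases) (auto simp: power2_eq_square)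

lemma round_facts:
  fixes z :: "real^'n" and L :: nat
  assumes nz: "norm z = 1" and L: "L > 0"
  defines "r \<equiv> round_vec z L" and "p \<equiv> arg_max_on (\<lambda>i. \<bar>z$i\<bar>) UNIV"
  shows "(\<forall>i. r$i = sgn (z$i) * \<bar>r$i\<bar>)
    \<and> (\<forall>i. \<exists>k::int. (r$i)^2 = of_int k / real L)
    \<and> norm r = 1
    \<and> (\<forall>i. i \<noteq> p \<longrightarrow> (r$i)^2 \<le> (z$i)^2 \<and> (z$i)^2 - (r$i)^2 \<le> 1 / real L)
    \<and> (z$p)^2 \<le> (r$p)^2 \<and> (r$p)^2 \<le> (z$p)^2 + real CARD('n) / real L
    \<and> 1 \<le> real CARD('n) * (z$p)^2"
proof -
  define fl where "fl i = \<lfloor>(z$i)^2 * real L\<rfloor>" for i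
  define zt where "zt = (\<chi> i. sgn (z$i) * sqrt (real_of_int (fl i) / real L))"
  define \<delta> where "\<delta> = 1 - (norm zt)^2"
  have r: "r = (\<chi> i. if i = p then sgn (z$p) * sqrt ((zt$p)^2 + \<delta>) else zt$i)"
    unfolding r_def round_vec_def Let_def p_def zt_def \<delta>_def fl_def by simp
  have Lr: "real L > 0" using L by simp
  have fl0: "0 \<le> fl i" for i unfolding fl_def using Lr by simp
  have fl1: "real_of_int (fl i) / L \<le> (z$i)^2" for i
    unfolding fl_def using Lr by (simp add: pos_divide_le_eq)
  have fl2: "(z$i)^2 - 1/L < real_of_int (fl i) / L" for i
  proof -
    have "(z$i)^2 * real L < real_of_int (fl i) + 1" unfolding fl_def by linarith
    moreover have "(z$i)^2 - 1/L = ((z$i)^2 * real L - 1) / L" using Lr by (simp add: field_simps)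
    ultimately show ?thesis using divide_strict_right_mono[OF _ Lr] by simp
  qed
  have fz: "z$i = 0 \<Longrightarrow> fl i = 0" for i unfolding fl_def by simp
  have zt2: "(zt$i)^2 = real_of_int (fl i) / L" for i
  proof (cases "z$i = 0")
    case True then show ?thesis using fz[OF True] unfolding zt_def by simp
  next
    case False then show ?thesis unfolding zt_def using sgn_sq_aux[OF False] fl0[of i] Lr by simp
  qed
  have nzt: "(norm zt)^2 = (\<Sum>i\<in>UNIV. real_of_int (fl i) / L)" by (simp add: norm2_sum zt2)
  have sumz: "(\<Sum>i\<in>UNIV. (z$i)^2) = 1" using norm2_sum[of z] nz by simp
  have \<delta>_eq: "\<delta> = (\<Sum>i\<in>UNIV. (z$i)^2 - real_of_int (fl i) / L)"
    unfolding \<delta>_def nzt by (simp add: sum_subtractf sumz)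
  have \<delta>0: "\<delta> \<ge> 0" unfolding \<delta>_eq using fl1 by (intro sum_nonneg) (simp add: algebra_simps)
  have \<delta>1: "\<delta> \<le> real CARD('n) / L"
  proof -
    have "\<delta> \<le> (\<Sum>i\<in>(UNIV::'n set). 1 / L)" unfolding \<delta>_eq
      using fl2 by (intro sum_mono) (simp add: algebra_simps less_imp_le)
    then show ?thesis by simp
  qed
  have \<delta>2: "(z$p)^2 - real_of_int (fl p) / L \<le> \<delta>" unfolding \<delta>_eq
    using fl1 by (intro member_le_sum) (auto simp: algebra_simps)
  have pmax: "\<forall>j. \<bar>z$j\<bar> \<le> \<bar>z$p\<bar>" unfolding p_def by (rule argmax_prop)
  have pmax2: "(z$j)^2 \<le> (z$p)^2" for j using pmax abs_le_square_iff by blast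
  have np: "1 \<le> real CARD('n) * (z$p)^2"
  proof -
    have "1 \<le> (\<Sum>i\<in>(UNIV::'n set). (z$p)^2)" unfolding sumz[symmetric]
      by (intro sum_mono pmax2)
    then show ?thesis by simp
  qed
  have zp0: "z$p \<noteq> 0" using np by auto
  have rp: "r$p = sgn (z$p) * sqrt ((zt$p)^2 + \<delta>)" unfolding r by simp
  have ri: "i \<noteq> p \<Longrightarrow> r$i = zt$i" for i unfolding r by simp
  have rp2: "(r$p)^2 = real_of_int (fl p) / L + \<delta>"
    unfolding rp sgn_sq_aux[OF zp0] using \<delta>0 fl0[of p] Lr by (simp add: zt2)
  have ri2: "(r$i)^2 = real_of_int (fl i) / L + (if i = p then \<delta> else 0)" for i
    using rp2 ri zt2 by auto
  have S1: "\<forall>i. r$i = sgn (z$i) * \<bar>r$i\<bar>"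
  proof
    fix i show "r$i = sgn (z$i) * \<bar>r$i\<bar>"
    proof (cases "i = p")
      case True then show ?thesis using rp sgn_abs_aux[of "sqrt ((zt$p)^2 + \<delta>)" "z$p"] \<delta>0 by simp
    next
      case False then show ?thesis using ri[OF False]
        sgn_abs_aux[of "sqrt (real_of_int (fl i) / real L)" "z$i"] fl0[of i] Lr
        unfolding zt_def by simp
    qed
  qed
  have S2: "\<forall>i. \<exists>k::int. (r$i)^2 = of_int k / real L"
  proof
    fix i show "\<exists>k::int. (r$i)^2 = of_int k / real L"
    proof (cases "i = p")
      case True
      have "\<delta> = (real L - (\<Sum>j\<in>UNIV. real_of_int (fl j))) / L"
        unfolding \<delta>_def nzt using Lr by (simp add: sum_divide_distrib[symmetric] field_simps)
      then have "(r$i)^2 = of_int (fl p + int L - (\<Sum>j\<in>UNIV. fl j)) / real L"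
        using True rp2 by (simp add: add_divide_distrib diff_divide_distrib)
      then show ?thesis by blast
    next
      case False then show ?thesis using ri2[of i] by auto
    qed
  qed
  have S3: "norm r = 1"
  proof -
    have "(norm r)^2 = (\<Sum>i\<in>UNIV. real_of_int (fl i) / L) + \<delta>"
      unfolding norm2_sum ri2 by (simp add: sum.distrib)
    also have "\<dots> = 1" unfolding \<delta>_def nzt by simp
    finally show ?thesis using norm_ge_zero[of r] by (auto simp add: power2_eq_1_iff)
  qed
  have S4: "\<forall>i. i \<noteq> p \<longrightarrow> (r$i)^2 \<le> (z$i)^2 \<and> (z$i)^2 - (r$i)^2 \<le> 1 / real L"
    using ri2 fl1 fl2 by (auto simp: less_imp_le algebra_simps)
  show ?thesis using S1 S2 S3 S4 rp2 \<delta>1 \<delta>2 np fl1[of p] by auto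
qed

lemma round_idem:
  fixes z :: "real^'n" and L :: nat
  assumes nz: "norm z = 1" and L: "L > 0" and k: "\<forall>i. \<exists>k::int. (z$i)^2 = of_int k / real L"
  shows "round_vec z L = z"
proof -
  have zt: "(\<chi> i. sgn (z$i) * sqrt (real_of_int \<lfloor>(z$i)^2 * real L\<rfloor> / real L)) = z"
  unfolding vec_eq_iff
  proof
    fix i
    obtain k :: int where kk: "(z$i)^2 = of_int k / real L" using k by blast
    have "(z$i)^2 * real L = of_int k" using kk L by simp
    then have "real_of_int \<lfloor>(z$i)^2 * real L\<rfloor> / real L = (z$i)^2" using kk by simp
    then show "(\<chi> i. sgn (z$i) * sqrt (real_of_int \<lfloor>(z$i)^2 * real L\<rfloor> / real L)) $ i = z $ i"
      by (simp add: sgn_mult_abs)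
  qed
  show ?thesis unfolding round_vec_def Let_def zt nz
    by (simp add: vec_eq_iff sgn_mult_abs)
qed

lemma aux1: fixes a b c :: real assumes "a \<ge> 0" "b \<ge> 0" "b^2 \<le> a^2" "a^2 - b^2 \<le> c"
  shows "(a - b)^2 \<le> c"
proof -
  have ba: "b \<le> a" using assms power2_le_imp_le by blast
  have "(a - b)^2 = (a-b)*(a-b)" by (simp add: power2_eq_square)
  also have "\<dots> \<le> (a-b)*(a+b)" using ba assms by (intro mult_left_mono) auto
  also have "\<dots> = a^2 - b^2" by (simp add: power2_eq_square algebra_simps)
  finally show ?thesis using assms by simp
qed

lemma aux2: fixes a b n L :: real assumes "a \<ge> 0" "b \<ge> 0" "a^2 \<le> b^2" "b^2 \<le> a^2 + n/L"
  "1 \<le> n * a^2" "n^3 \<le> L" "L > 0" "n > 0"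
  shows "(b - a)^2 \<le> 1/L"
proof -
  define x where "x = b - a"
  have ab: "a \<le> b" using assms power2_le_imp_le by blast
  then have x0: "x \<ge> 0" unfolding x_def by simp
  have "x * a \<le> x * (a + b)" using x0 assms by (intro mult_left_mono) auto
  also have "\<dots> = b^2 - a^2" unfolding x_def by (simp add: power2_eq_square algebra_simps)
  also have "\<dots> \<le> n / L" using assms by simp
  finally have xa: "x * a \<le> n / L" .
  have "x^2 \<le> x^2 * (n * a^2)" using assms by (simp add: mult_le_cancel_left1)
  also have "\<dots> = n * (x*a)^2" by (simp add: power2_eq_square)
  also have "\<dots> \<le> n * (n/L)^2" using xa x0 assms
    by (intro mult_left_mono power_mono) auto
  also have "\<dots> = n^3 / L^2" by (simp add: power2_eq_square power3_eq_cube)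
  also have "\<dots> \<le> L / L^2" using assms by (intro divide_right_mono) auto
  also have "\<dots> = 1 / L" using assms by (simp add: power2_eq_square)
  finally show ?thesis unfolding x_def .
qed

lemma round_bounds:
  fixes z :: "real^'n" and L :: nat
  assumes nz: "norm z = 1" and L: "L > 0" and Ln: "real L \<ge> real CARD('n)^3"
  defines "r \<equiv> round_vec z L" and "p \<equiv> arg_max_on (\<lambda>i. \<bar>z$i\<bar>) UNIV"
  shows "(\<forall>i. r$i = sgn (z$i) * \<bar>r$i\<bar>)
    \<and> (\<forall>i. (z$i - r$i)^2 \<le> 1 / real L)
    \<and> (\<forall>i. (r$i)^2 \<le> 2 * (z$i)^2)
    \<and> (\<forall>i. i \<noteq> p \<longrightarrow> \<bar>r$i\<bar> \<le> \<bar>z$i\<bar>)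
    \<and> 1 \<le> real CARD('n) * (z$p)^2
    \<and> norm r = 1"
proof -
  note F = round_facts[OF nz L, folded r_def p_def]
  have sg: "\<forall>i. r$i = sgn (z$i) * \<bar>r$i\<bar>" using F by blast
  have np: "1 \<le> real CARD('n) * (z$p)^2" using F by blast
  have nonp: "\<forall>i. i \<noteq> p \<longrightarrow> (r$i)^2 \<le> (z$i)^2 \<and> (z$i)^2 - (r$i)^2 \<le> 1 / real L" using F by blast
  have pp: "(z$p)^2 \<le> (r$p)^2" "(r$p)^2 \<le> (z$p)^2 + real CARD('n) / real L" using F by blast+
  have n0: "real CARD('n) > 0" by simp
  have d: "(z$i - r$i)^2 = (\<bar>z$i\<bar> - \<bar>r$i\<bar>)^2" for i
  proof (cases "z$i = 0")
    case True then show ?thesis using sg by (metis abs_zero diff_zero mult_zero_left sgn_0)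
  next
    case False
    have "z$i - r$i = sgn (z$i) * (\<bar>z$i\<bar> - \<bar>r$i\<bar>)" using sg
      by (metis right_diff_distrib sgn_mult_abs)
    then show ?thesis using sgn_sq_aux[OF False] by simp
  qed
  have B1: "\<forall>i. (z$i - r$i)^2 \<le> 1 / real L"
  proof
    fix i show "(z$i - r$i)^2 \<le> 1 / real L"
    proof (cases "i = p")
      case True
      have "(\<bar>r$i\<bar> - \<bar>z$i\<bar>)^2 \<le> 1 / real L"
        using aux2[of "\<bar>z$i\<bar>" "\<bar>r$i\<bar>" "real CARD('n)" "real L"] pp np Ln L True by simp
      then show ?thesis unfolding d by (simp add: power2_commute)
    next
      case False
      then show ?thesis unfolding d using aux1[of "\<bar>z$i\<bar>" "\<bar>r$i\<bar>"] nonp by simp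
    qed
  qed
  have B2: "\<forall>i. (r$i)^2 \<le> 2 * (z$i)^2"
  proof
    fix i show "(r$i)^2 \<le> 2 * (z$i)^2"
    proof (cases "i = p")
      case True
      have "real CARD('n) / real L \<le> real CARD('n) / real CARD('n)^3"
        using Ln n0 L by (intro divide_left_mono) auto
      also have "\<dots> \<le> 1 / real CARD('n)" using n0
        by (simp add: power3_eq_cube divide_simps)
      also have "\<dots> \<le> (z$p)^2" using np n0 by (simp add: divide_simps mult.commute)
      finally show ?thesis using pp True by simp
    next
      case False then show ?thesis using nonp
        by (metis mult_2 le_add_same_cancel1 order_trans zero_le_power2)
    qed
  qed
  have B3: "\<forall>i. i \<noteq> p \<longrightarrow> \<bar>r$i\<bar> \<le> \<bar>z$i\<bar>" using nonp abs_le_square_iff by blast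
  show ?thesis using sg B1 B2 B3 np F by blast
qed

lemma tA: fixes z w r s q M :: real
  assumes "\<bar>z-r\<bar> \<le> q" "\<bar>w-s\<bar> \<le> q" "\<bar>w\<bar> \<le> M" "\<bar>r\<bar> \<le> M"
  shows "\<bar>z * w - r * s\<bar> \<le> 2 * q * M"
proof -
  have "z * w - r * s = (z-r) * w + r * (w-s)" by (simp add: algebra_simps)
  then have "\<bar>z * w - r * s\<bar> \<le> \<bar>z-r\<bar>*\<bar>w\<bar> + \<bar>r\<bar>*\<bar>w-s\<bar>"
    by (metis abs_mult abs_triangle_ineq)
  also have "\<dots> \<le> q*M + M*q" using assms
    by (intro add_mono mult_mono) auto
  finally show ?thesis by (simp add: algebra_simps)
qed

lemma tB: fixes z w r s q M :: real
  assumes "\<bar>z-r\<bar> \<le> q" "\<bar>w-s\<bar> \<le> q" "\<bar>s\<bar> \<le> M" "\<bar>z\<bar> \<le> M"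
  shows "\<bar>z * w - r * s\<bar> \<le> 2 * q * M"
proof -
  have "z * w - r * s = (z-r) * s + z * (w-s)" by (simp add: algebra_simps)
  then have "\<bar>z * w - r * s\<bar> \<le> \<bar>z-r\<bar>*\<bar>s\<bar> + \<bar>z\<bar>*\<bar>w-s\<bar>"
    by (metis abs_mult abs_triangle_ineq)
  also have "\<dots> \<le> q*M + M*q" using assms
    by (intro add_mono mult_mono) auto
  finally show ?thesis by (simp add: algebra_simps)
qed

lemma core3:
  fixes z w :: "real^'n" and L :: nat and \<epsilon> :: real
  assumes nz: "norm z = 1" and nw: "norm w = 1" and L: "L > 0"
    and e: "0 < \<epsilon>" "\<epsilon> < 1" and LL: "real L \<ge> 9 * real CARD('n)^6 / \<epsilon>^2"
  defines "r \<equiv> round_vec z L" and "s \<equiv> round_vec w L" and "I \<equiv> {i. z$i \<noteq> 0 \<and> w$i \<noteq> 0}"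
  shows "\<bar>z \<bullet> w - r \<bullet> s\<bar> \<le> \<epsilon> * max (norm (restrict_vec z I)) (norm (restrict_vec w I))"
proof -
  define n where "n = real CARD('n)"
  have n1: "n \<ge> 1" unfolding n_def by simp
  have e2: "\<epsilon>^2 \<le> 1" using e by (simp add: power_le_one)
  have "n^3 \<le> 9 * n^6"
  proof -
    have "n^3 * 1 \<le> n^3 * n^3" using n1 by (intro mult_left_mono) (auto simp: one_le_power)
    then have "n^3 \<le> n^6" by (simp add: power_add[symmetric])
    moreover have "n^6 \<ge> 0" using n1 by simp
    ultimately show ?thesis by linarith
  qed
  also have "9 * n^6 \<le> 9 * n^6 / \<epsilon>^2" using e e2 n1
    by (simp add: le_divide_eq)
  finally have "n^3 \<le> real L" using LL unfolding n_def by linarith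
  then have Ln: "real L \<ge> real CARD('n)^3" unfolding n_def .
  define p where "p = arg_max_on (\<lambda>i. \<bar>z$i\<bar>) UNIV"
  define q where "q = arg_max_on (\<lambda>i. \<bar>w$i\<bar>) UNIV"
  note Fz = round_bounds[OF nz L Ln, folded r_def p_def]
  note Fw = round_bounds[OF nw L Ln, folded s_def q_def]
  define M where "M = max (norm (restrict_vec z I)) (norm (restrict_vec w I))"
  define q0 where "q0 = 1 / sqrt (real L)"
  have M0: "M \<ge> 0" unfolding M_def by (simp add: le_max_iff_disj)
  have sq: "\<bar>x\<bar> \<le> q0" if "x^2 \<le> 1 / real L" for x
  proof -
    have "sqrt (x^2) \<le> sqrt (1 / real L)" using that by (rule real_sqrt_le_mono)
    then show ?thesis unfolding q0_def by (simp add: real_sqrt_divide)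
  qed
  have dz: "\<bar>z$i - r$i\<bar> \<le> q0" for i using Fz sq by blast
  have dw: "\<bar>w$i - s$i\<bar> \<le> q0" for i using Fw sq by blast
  have q00: "q0 \<ge> 0" unfolding q0_def by simp
  have b1: "\<bar>x$i\<bar> \<le> 1" if "norm x = 1" for x :: "real^'n" and i
    using component_le_norm_cart[of x i] that by simp
  have zI: "\<bar>z$i\<bar> \<le> M" if "i \<in> I" for i
    using component_le_norm_cart[of "restrict_vec z I" i] that unfolding M_def restrict_vec_def by auto
  have wI: "\<bar>w$i\<bar> \<le> M" if "i \<in> I" for i
    using component_le_norm_cart[of "restrict_vec w I" i] that unfolding M_def restrict_vec_def by auto
  have T: "\<bar>z$i * w$i - r$i * s$i\<bar> \<le> 2 * n * q0 * M" for i
  proof (cases "i \<in> I")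
    case False
    then have "z$i = 0 \<or> w$i = 0" unfolding I_def by auto
    then have "r$i = 0 \<or> s$i = 0" using Fz Fw by (metis mult_zero_left sgn_0)
    then have "z$i * w$i - r$i * s$i = 0" using \<open>z$i = 0 \<or> w$i = 0\<close> by auto
    then show ?thesis using n1 q00 M0 by simp
  next
    case True
    have "1 * (q0*M) \<le> n * (q0*M)" using n1 q00 M0 by (intro mult_right_mono) auto
    then have le: "2*q0*M \<le> 2*n*q0*M" by (simp add: mult.assoc)
    show ?thesis
    proof (cases "i = p")
      case False
      have "\<bar>r$i\<bar> \<le> M" using Fz False zI[OF True] by force
      then show ?thesis using tA[OF dz[of i] dw[of i] wI[OF True]] le by linarith
    next
      case ip: True
      show ?thesis
      proof (cases "i = q")
        case False
        have "\<bar>s$i\<bar> \<le> M" using Fw False wI[OF True] by force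
        then show ?thesis using tB[OF dz[of i] dw[of i] _ zI[OF True]] le by linarith
      next
        case iq: True
        have "1 \<le> n * (z$i)^2" using Fz ip unfolding n_def by blast
        also have "(z$i)^2 \<le> M" proof -
          have "(z$i)^2 = \<bar>z$i\<bar> * \<bar>z$i\<bar>" by (simp add: power2_eq_square)
          also have "\<dots> \<le> 1 * M" using b1[OF nz, of i] zI[OF True] by (intro mult_mono) auto
          finally show ?thesis by simp
        qed
        then have "n * (z$i)^2 \<le> n * M" using n1 by simp
        finally have nM: "1 \<le> n * M" .
        have "\<bar>z$i * w$i - r$i * s$i\<bar> \<le> 2 * q0 * 1"
          using tA[OF dz[of i] dw[of i], of 1] b1[OF nw, of i] b1[of r i] Fz by auto
        also have "\<dots> \<le> 2 * q0 * (n * M)" using nM q00 by (intro mult_left_mono) auto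
        finally show ?thesis by (simp add: mult.assoc mult.left_commute)
      qed
    qed
  qed
  have "z \<bullet> w - r \<bullet> s = (\<Sum>i\<in>UNIV. z$i * w$i - r$i * s$i)"
    by (simp add: inner_vec_def sum_subtractf)
  then have "\<bar>z \<bullet> w - r \<bullet> s\<bar> \<le> (\<Sum>i\<in>UNIV. \<bar>z$i * w$i - r$i * s$i\<bar>)"
    by (simp add: sum_abs)
  also have "\<dots> \<le> (\<Sum>i\<in>(UNIV::'n set). 2 * n * q0 * M)" by (intro sum_mono T)
  also have "\<dots> = (2 * n^2 * q0) * M" by (simp add: n_def power2_eq_square)
  also have "\<dots> \<le> \<epsilon> * M"
  proof (rule mult_right_mono[OF _ M0])
    have pos: "3 * n^3 / \<epsilon> > 0" using n1 e by simp
    have "(3 * n^3 / \<epsilon>)^2 = 9 * n^6 / \<epsilon>^2"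
      by (simp add: power_divide power_mult_distrib power_mult[symmetric])
    then have sL: "3 * n^3 / \<epsilon> \<le> sqrt (real L)" using LL unfolding n_def
      by (intro real_le_rsqrt) simp
    have sL0: "sqrt (real L) > 0" using L by simp
    have "q0 \<le> 1 / (3 * n^3 / \<epsilon>)" unfolding q0_def
      using divide_left_mono[OF sL _ mult_pos_pos[OF sL0 pos], of 1] by simp
    also have "\<dots> = \<epsilon> / (3 * n^3)" by simp
    finally have "2 * n^2 * q0 \<le> 2 * n^2 * (\<epsilon> / (3 * n^3))" using n1 by (intro mult_left_mono) auto
    also have "\<dots> = \<epsilon> * (2 / (3 * n))" using n1 by (simp add: power2_eq_square power3_eq_cube field_simps)
    also have "\<dots> \<le> \<epsilon> * 1" using n1 e by (intro mult_left_mono) auto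
    finally show "2 * n^2 * q0 \<le> \<epsilon>" by simp
  qed
  finally show ?thesis unfolding M_def .
qed

lemma core4:
  fixes z r :: "real^'n"
  assumes "\<forall>i. (r$i)^2 \<le> 2 * (z$i)^2"
  shows "norm (restrict_vec r I) \<le> 2 * norm (restrict_vec z I)"
proof -
  have "(norm (restrict_vec r I))^2 = (\<Sum>i\<in>UNIV. (if i \<in> I then (r$i)^2 else 0))"
    unfolding norm2_sum restrict_vec_def by (intro sum.cong) auto
  also have "\<dots> \<le> (\<Sum>i\<in>UNIV. 2 * (if i \<in> I then (z$i)^2 else 0))"
    using assms by (intro sum_mono) auto
  also have "\<dots> = 2 * (norm (restrict_vec z I))^2"
    unfolding norm2_sum restrict_vec_def sum_distrib_left[symmetric] by (intro arg_cong[where f="\<lambda>x. 2 * x"] sum.cong) auto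
  also have "\<dots> \<le> (2 * norm (restrict_vec z I))^2" by (simp add: power_mult_distrib)
  finally show ?thesis by (rule power2_le_imp_le) simp
qed

lemma restrict_scale: "restrict_vec (c *\<^sub>R x) I = c *\<^sub>R restrict_vec x I"
  by (simp add: restrict_vec_def vec_eq_iff)

lemma unit_parts:
  fixes a :: "real^'n" and L :: nat
  assumes "a \<noteq> 0" "L > 0"
  defines "z \<equiv> (1 / norm a) *\<^sub>R a"
  defines "a' \<equiv> norm a *\<^sub>R round_vec z L"
  shows "norm z = 1" "a = norm a *\<^sub>R z" "norm a' = norm a"
    "\<forall>i. \<exists>k::int. (a'$i)^2 / (norm a')^2 = of_int k / real L"
    "\<forall>(H :: 's \<Rightarrow> nat \<Rightarrow> ('n \<times> nat) \<Rightarrow> real) m s. wmh_sketch H L m s a = wmh_sketch H L m s a'"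
    "\<And>i. a$i \<noteq> 0 \<longleftrightarrow> z$i \<noteq> 0"
proof -
  have na: "norm a > 0" using assms by simp
  show nz: "norm z = 1" unfolding z_def using na by simp
  show az: "a = norm a *\<^sub>R z" unfolding z_def using na by simp
  define r where "r = round_vec z L"
  note F = round_facts[OF nz assms(2), folded r_def]
  have nr: "norm r = 1" using F by blast
  show na': "norm a' = norm a" unfolding a'_def r_def[symmetric] using nr by simp
  show "\<forall>i. \<exists>k::int. (a'$i)^2 / (norm a')^2 = of_int k / real L"
  proof
    fix i
    have "(a'$i)^2 / (norm a')^2 = (r$i)^2" unfolding na' unfolding a'_def r_def[symmetric]
      using na by (simp add: power_mult_distrib)
    then show "\<exists>k::int. (a'$i)^2 / (norm a')^2 = of_int k / real L" using F by simp
  qed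
  have e1: "(1 / norm a) *\<^sub>R a' = r" unfolding a'_def r_def[symmetric] using na by simp
  have e2: "round_vec r L = r" using round_idem[OF nr assms(2)] F by blast
  have e3: "round_vec ((1 / norm a) *\<^sub>R a) L = r" unfolding r_def z_def ..
  show "\<forall>(H :: 's \<Rightarrow> nat \<Rightarrow> ('n \<times> nat) \<Rightarrow> real) m s. wmh_sketch H L m s a = wmh_sketch H L m s a'"
    unfolding wmh_sketch_def na' e1 e2 e3 by simp
  show "\<And>i. a$i \<noteq> 0 \<longleftrightarrow> z$i \<noteq> 0" unfolding z_def using na by simp
qed

theorem lemma3:
  fixes a b :: "real^'n" and L :: nat
  assumes "a \<noteq> 0" and "b \<noteq> 0" and "L > 0"
  defines "a' \<equiv> norm a *\<^sub>R round_vec ((1 / norm a) *\<^sub>R a) L"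
      and "b' \<equiv> norm b *\<^sub>R round_vec ((1 / norm b) *\<^sub>R b) L"
      and "I \<equiv> {i. a$i \<noteq> 0 \<and> b$i \<noteq> 0}"
  shows "(\<forall>i. (\<exists>k::int. (a'$i)^2 / (norm a')^2 = of_int k / real L)
              \<and> (\<exists>k::int. (b'$i)^2 / (norm b')^2 = of_int k / real L))
       \<and> (\<forall>(H :: 's \<Rightarrow> nat \<Rightarrow> ('n \<times> nat) \<Rightarrow> real) m s.
            wmh_sketch H L m s a = wmh_sketch H L m s a'
          \<and> wmh_sketch H L m s b = wmh_sketch H L m s b')
       \<and> (\<forall>\<epsilon>::real. 0 < \<epsilon> \<and> \<epsilon> < 1 \<and> real L \<ge> 9 * real CARD('n)^6 / \<epsilon>^2 \<longrightarrow>
            \<bar>a \<bullet> b - a' \<bullet> b'\<bar> \<le> \<epsilon> * max (norm (restrict_vec a I) * norm b)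
                                              (norm a * norm (restrict_vec b I)))
       \<and> (real L \<ge> real CARD('n)^3 \<longrightarrow>
            max (norm (restrict_vec a' I) * norm b') (norm a' * norm (restrict_vec b' I))
              \<le> 2 * max (norm (restrict_vec a I) * norm b) (norm a * norm (restrict_vec b I)))"
proof -
  define z where "z = (1 / norm a) *\<^sub>R a"
  define w where "w = (1 / norm b) *\<^sub>R b"
  note A = unit_parts[OF assms(1,3), folded z_def a'_def]
  note B = unit_parts[OF assms(2,3), folded w_def b'_def]
  define r where "r = round_vec z L"
  define rb where "rb = round_vec w L"
  have a'r: "a' = norm a *\<^sub>R r" unfolding a'_def r_def z_def ..
  have b'r: "b' = norm b *\<^sub>R rb" unfolding b'_def rb_def w_def ..
  have II: "I = {i. z$i \<noteq> 0 \<and> w$i \<noteq> 0}" unfolding I_def using A(6) B(6) by simp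
  have P1: "\<forall>i. (\<exists>k::int. (a'$i)^2 / (norm a')^2 = of_int k / real L)
              \<and> (\<exists>k::int. (b'$i)^2 / (norm b')^2 = of_int k / real L)" using A(4) B(4) by blast
  have P2: "\<forall>(H :: 's \<Rightarrow> nat \<Rightarrow> ('n \<times> nat) \<Rightarrow> real) m s.
            wmh_sketch H L m s a = wmh_sketch H L m s a'
          \<and> wmh_sketch H L m s b = wmh_sketch H L m s b'"
    by (intro allI conjI; rule A(5)[rule_format] B(5)[rule_format])
  have maxe: "max (norm (restrict_vec a I) * norm b) (norm a * norm (restrict_vec b I))
     = (norm a * norm b) * max (norm (restrict_vec z I)) (norm (restrict_vec w I))"
    apply (subst (1 2) A(2)) apply (subst (1 2) B(2))
    unfolding restrict_scale
    by (simp add: A(1) B(1) max_mult_distrib_left algebra_simps)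
  have nab: "norm a * norm b \<ge> 0" by simp
  have P3: "\<forall>\<epsilon>::real. 0 < \<epsilon> \<and> \<epsilon> < 1 \<and> real L \<ge> 9 * real CARD('n)^6 / \<epsilon>^2 \<longrightarrow>
            \<bar>a \<bullet> b - a' \<bullet> b'\<bar> \<le> \<epsilon> * max (norm (restrict_vec a I) * norm b)
                                              (norm a * norm (restrict_vec b I))"
  proof (intro allI impI)
    fix \<epsilon> :: real assume h: "0 < \<epsilon> \<and> \<epsilon> < 1 \<and> real L \<ge> 9 * real CARD('n)^6 / \<epsilon>^2"
    have C: "\<bar>z \<bullet> w - r \<bullet> rb\<bar> \<le> \<epsilon> * max (norm (restrict_vec z I)) (norm (restrict_vec w I))"
      unfolding II r_def rb_def using core3[OF A(1) B(1) assms(3)] h by blast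
    have "a \<bullet> b - a' \<bullet> b' = (norm a * norm b) * (z \<bullet> w - r \<bullet> rb)"
      apply (subst A(2)) apply (subst B(2)) unfolding a'r b'r by (simp add: algebra_simps)
    then have "\<bar>a \<bullet> b - a' \<bullet> b'\<bar> = (norm a * norm b) * \<bar>z \<bullet> w - r \<bullet> rb\<bar>" by (simp add: abs_mult)
    also have "\<dots> \<le> (norm a * norm b) * (\<epsilon> * max (norm (restrict_vec z I)) (norm (restrict_vec w I)))"
      using C nab by (rule mult_left_mono)
    finally show "\<bar>a \<bullet> b - a' \<bullet> b'\<bar> \<le> \<epsilon> * max (norm (restrict_vec a I) * norm b)
                                              (norm a * norm (restrict_vec b I))"
      unfolding maxe by (simp add: algebra_simps)
  qed
  have P4: "real L \<ge> real CARD('n)^3 \<longrightarrow>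
            max (norm (restrict_vec a' I) * norm b') (norm a' * norm (restrict_vec b' I))
              \<le> 2 * max (norm (restrict_vec a I) * norm b) (norm a * norm (restrict_vec b I))"
  proof
    assume Ln: "real L \<ge> real CARD('n)^3"
    have rz: "norm (restrict_vec r I) \<le> 2 * norm (restrict_vec z I)"
      using core4 round_bounds[OF A(1) assms(3) Ln] unfolding r_def by blast
    have rw: "norm (restrict_vec rb I) \<le> 2 * norm (restrict_vec w I)"
      using core4 round_bounds[OF B(1) assms(3) Ln] unfolding rb_def by blast
    have "max (norm (restrict_vec a' I) * norm b') (norm a' * norm (restrict_vec b' I))
       = (norm a * norm b) * max (norm (restrict_vec r I)) (norm (restrict_vec rb I))"
      unfolding A(3) B(3) unfolding a'r b'r restrict_scale
      by (simp add: max_mult_distrib_left algebra_simps)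
    also have "\<dots> \<le> (norm a * norm b) * (2 * max (norm (restrict_vec z I)) (norm (restrict_vec w I)))"
      using rz rw nab by (intro mult_left_mono) auto
    finally show "max (norm (restrict_vec a' I) * norm b') (norm a' * norm (restrict_vec b' I))
              \<le> 2 * max (norm (restrict_vec a I) * norm b) (norm a * norm (restrict_vec b I))"
      unfolding maxe by (simp add: algebra_simps)
  qed
  show ?thesis using P1 P2 P3 P4 by blast
qed

end
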